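(* Suppose $(\lambda_*,z_* )$ is a minimizer of QEPmin. Then a minimizer $v_*$ of CRQopt is given by $v_*=n_0-\frac{\gamma^2}{b_0^{\top}z_*}(PAP-\lambda_*I)z_*$ if $b_0^{\top}z_*\neq0$, and $v_*=n_0+x_*+\sqrt{\gamma^2-\|x_*\|^2}\,\frac{z_*}{\|z_*\|}$ if $b_0^{\top}z_*=0$, where in the latter case $x_*=-(PAP-\lambda_*I)^{\dagger}b_0$, and it is guaranteed that $\|x_*\|\le\gamma$.
   Context: Let $A\in\mathbb{R}^{n\times n}$ be symmetric, $C\in\mathbb{R}^{n\times m}$ ($m<n$) full column rank, $b\in\mathbb{R}^m$, $n_0=C(C^{\top}C)^{-1}b$ with $\|n_0\|<1$, $\gamma=\sqrt{1-\|n_0\|^2}$, $P=I-C(C^{\top}C)^{-1}C^{\top}$ (orthogonal projector onto $\mathcal N(C^{\top})$), $b_0=PAn_0$, assumed nonzero. $X^\dagger$ is the Moore–Penrose inverse. CRQopt: minimize $v^{\top}Av$ over $v\in\mathbb{R}^n$ subject to $v^{\top}v=1$ and $C^{\top}v=b$. QEPmin: minimize $\lambda$ over pairs $(\lambda,z)$ with $\lambda\in\mathbb{R}$, $0\neq z\in\mathcal N(C^{\top})$ and $(PAP-\lambda I)^2z=\gamma^{-2}b_0b_0^{\top}z$. *)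

theory Defs
  imports "HOL-Analysis.Analysis"
begin

text \<open>Moore--Penrose inverse, defined by the four Penrose conditions (it exists and is unique).\<close>
definition mp_pinv :: "real^'n^'n \<Rightarrow> real^'n^'n" where
  "mp_pinv X = (THE Y. X ** Y ** X = X \<and> Y ** X ** Y = Y \<and>
      transpose (X ** Y) = X ** Y \<and> transpose (Y ** X) = Y ** X)"

definition n0 :: "real^'m^'n \<Rightarrow> real^'m \<Rightarrow> real^'n" where
  "n0 C b = C *v (matrix_inv (transpose C ** C) *v b)"

definition gam :: "real^'m^'n \<Rightarrow> real^'m \<Rightarrow> real" where
  "gam C b = sqrt (1 - (norm (n0 C b))\<^sup>2)"

definition projP :: "real^'m^'n \<Rightarrow> real^'n^'n" where
  "projP C = mat 1 - C ** matrix_inv (transpose C ** C) ** transpose C"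

definition b0 :: "real^'n^'n \<Rightarrow> real^'m^'n \<Rightarrow> real^'m \<Rightarrow> real^'n" where
  "b0 A C b = projP C *v (A *v n0 C b)"

definition outer :: "real^'n \<Rightarrow> real^'n \<Rightarrow> real^'n^'n" where
  "outer x y = (\<chi> i j. x $ i * y $ j)"

definition CRQ_feasible :: "real^'m^'n \<Rightarrow> real^'m \<Rightarrow> real^'n \<Rightarrow> bool" where
  "CRQ_feasible C b v \<longleftrightarrow> v \<bullet> v = 1 \<and> transpose C *v v = b"

definition CRQ_minimizer :: "real^'n^'n \<Rightarrow> real^'m^'n \<Rightarrow> real^'m \<Rightarrow> real^'n \<Rightarrow> bool" where
  "CRQ_minimizer A C b v \<longleftrightarrow> CRQ_feasible C b v \<and>
     (\<forall>w. CRQ_feasible C b w \<longrightarrow> v \<bullet> (A *v v) \<le> w \<bullet> (A *v w))"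

definition QEP_feasible :: "real^'n^'n \<Rightarrow> real^'m^'n \<Rightarrow> real^'m \<Rightarrow> real \<Rightarrow> real^'n \<Rightarrow> bool" where
  "QEP_feasible A C b lam z \<longleftrightarrow> z \<noteq> 0 \<and> transpose C *v z = 0 \<and>
     ((projP C ** A ** projP C - lam *\<^sub>R mat 1) ** (projP C ** A ** projP C - lam *\<^sub>R mat 1)) *v z
       = (inverse ((gam C b)\<^sup>2) *\<^sub>R outer (b0 A C b) (b0 A C b)) *v z"

definition QEP_minimizer :: "real^'n^'n \<Rightarrow> real^'m^'n \<Rightarrow> real^'m \<Rightarrow> real \<Rightarrow> real^'n \<Rightarrow> bool" where
  "QEP_minimizer A C b lam z \<longleftrightarrow> QEP_feasible A C b lam z \<and>
     (\<forall>mu w. QEP_feasible A C b mu w \<longrightarrow> lam \<le> mu)"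

end

theory Submission imports Defs begin

declare transpose_matrix_vector[simp del]

lemma adj: fixes A :: "real^'m^'n"
  shows "(A *v x) \<bullet> y = x \<bullet> (transpose A *v y)"
  unfolding inner_vec_def matrix_vector_mult_def transpose_def
  apply (simp add: sum_distrib_left sum_distrib_right mult_ac)
  apply (rule sum.swap)
  done

lemma sym_adj: fixes A :: "real^'n^'n"
  assumes "transpose A = A" shows "(A *v x) \<bullet> y = x \<bullet> (A *v y)"
  using adj[of A x y] assms by simp

lemma outer_mv: "outer x y *v z = (y \<bullet> z) *\<^sub>R x"
  unfolding outer_def matrix_vector_mult_def inner_vec_def
  by (simp add: vec_eq_iff sum_distrib_left sum_distrib_right mult_ac)

lemma Mvec: fixes B :: "real^'n^'n"
  shows "(B - c *\<^sub>R mat 1) *v x = B *v x - c *\<^sub>R x"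
  by (simp add: matrix_vector_mult_diff_rdistrib scaleR_matrix_vector_assoc[symmetric])

lemma mat_inv: fixes A :: "real^'n^'n" assumes "invertible A"
  shows "A ** matrix_inv A = mat 1 \<and> matrix_inv A ** A = mat 1"
  using assms unfolding invertible_def matrix_inv_def by (rule someI_ex)

lemma inj_invertible: fixes A :: "real^'n^'n" assumes "inj ((*v) A)"
  shows "invertible A"
  using assms matrix_left_invertible_injective invertible_left_inverse by blast


lemma inj_of_zero: fixes A :: "real^'m^'n"
  assumes "\<And>x. A *v x = 0 \<Longrightarrow> x = 0" shows "inj ((*v) A)"
  using assms linear_injective_0[OF matrix_vector_mul_linear[of A]] by blast

lemma sa_transpose: fixes M :: "real^'n^'n"
  assumes "\<And>x y. (M *v x) \<bullet> y = x \<bullet> (M *v y)" shows "transpose M = M"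
proof -
  have "transpose M *v y = M *v y" for y
  proof -
    have "\<forall>x. x \<bullet> (transpose M *v y - M *v y) = 0"
      using adj[of M] assms by (simp add: inner_diff_right)
    then show ?thesis by (metis inner_eq_zero_iff eq_iff_diff_eq_0)
  qed
  then show ?thesis by (simp add: matrix_eq)
qed

lemma proj_facts:
  fixes C :: "real^'m^'n" and b :: "real^'m"
  assumes "rank C = CARD('m)"
  shows "\<And>x. transpose C *v (projP C *v x) = 0"
    and "\<And>z. transpose C *v z = 0 \<Longrightarrow> projP C *v z = z"
    and "\<And>x y. (projP C *v x) \<bullet> y = x \<bullet> (projP C *v y)"
    and "transpose C *v n0 C b = b"
    and "\<And>u. transpose C *v u = 0 \<Longrightarrow> n0 C b \<bullet> u = 0"
    and "projP C *v n0 C b = 0"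
proof -
  let ?D = "transpose C ** C"
  define G where "G = matrix_inv ?D"
  have injC: "inj ((*v) C)" using assms full_rank_injective by blast
  have "?D *v x = 0 \<Longrightarrow> x = 0" for x
  proof -
    assume h: "?D *v x = 0"
    have "(C *v x) \<bullet> (C *v x) = x \<bullet> (transpose C *v (C *v x))" by (rule adj)
    also have "\<dots> = 0" using h by (simp add: matrix_vector_mul_assoc)
    finally have "C *v x = 0" by simp
    then show "x = 0" using injC by (metis injD matrix_vector_mult_0_right)
  qed
  then have "invertible ?D" by (intro inj_invertible inj_of_zero)
  then have DG: "?D ** G = mat 1" "G ** ?D = mat 1" using mat_inv G_def by auto
  have DGv: "transpose C *v (C *v (G *v y)) = y" for y
    by (metis DG(1) matrix_vector_mul_assoc matrix_vector_mul_lid)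
  have GDv: "G *v (transpose C *v (C *v y)) = y" for y
    by (metis DG(2) matrix_vector_mul_assoc matrix_vector_mul_lid)
  have Gsa: "(G *v x) \<bullet> y = x \<bullet> (G *v y)" for x y
  proof -
    obtain y' where y': "y = transpose C *v (C *v y')" using DGv by metis
    obtain x' where x': "x = transpose C *v (C *v x')" using DGv by metis
    have "(G *v x) \<bullet> y = x' \<bullet> (transpose C *v (C *v y'))" using x' y' GDv by simp
    also have "\<dots> = (C *v x') \<bullet> (C *v y')" by (rule adj[symmetric])
    also have "\<dots> = (C *v y') \<bullet> (C *v x')" by (rule inner_commute)
    also have "\<dots> = y' \<bullet> (transpose C *v (C *v x'))" by (rule adj)
    also have "\<dots> = x \<bullet> (G *v y)" using x' y' GDv by (simp add: inner_commute)
    finally show ?thesis .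
  qed
  have Pv: "projP C *v x = x - C *v (G *v (transpose C *v x))" for x
    unfolding projP_def G_def
    by (simp add: matrix_vector_mult_diff_rdistrib matrix_vector_mul_assoc matrix_mul_assoc)
  show "transpose C *v (projP C *v x) = 0" for x
    unfolding Pv by (simp add: matrix_vector_mult_diff_distrib DGv)
  show "transpose C *v z = 0 \<Longrightarrow> projP C *v z = z" for z
    unfolding Pv by simp
  show "(projP C *v x) \<bullet> y = x \<bullet> (projP C *v y)" for x y
  proof -
    have "(C *v (G *v (transpose C *v x))) \<bullet> y = x \<bullet> (C *v (G *v (transpose C *v y)))"
      by (metis Gsa adj transpose_transpose)
    then show ?thesis unfolding Pv by (simp add: inner_diff_left inner_diff_right)
  qed
  have n0v: "n0 C b = C *v (G *v b)" unfolding n0_def G_def ..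
  show "transpose C *v n0 C b = b" unfolding n0v by (rule DGv)
  show "transpose C *v u = 0 \<Longrightarrow> n0 C b \<bullet> u = 0" for u
    unfolding n0v by (metis adj inner_zero_right)
  show "projP C *v n0 C b = 0" unfolding Pv n0v by (simp add: DGv)
qed


definition pen :: "real^'n^'n \<Rightarrow> real^'n^'n \<Rightarrow> bool" where
  "pen X Y \<longleftrightarrow> X ** Y ** X = X \<and> Y ** X ** Y = Y \<and>
      transpose (X ** Y) = X ** Y \<and> transpose (Y ** X) = Y ** X"

lemma pen_unique: assumes "pen M Y1" "pen M Y2" shows "Y1 = Y2"
proof -
  have a: "M ** Y1 ** M = M" "Y1 ** M ** Y1 = Y1" "transpose (M ** Y1) = M ** Y1" "transpose (Y1 ** M) = Y1 ** M"
    using assms(1) unfolding pen_def by auto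
  have b: "M ** Y2 ** M = M" "Y2 ** M ** Y2 = Y2" "transpose (M ** Y2) = M ** Y2" "transpose (Y2 ** M) = Y2 ** M"
    using assms(2) unfolding pen_def by auto
  have MT1: "transpose M = transpose M ** M ** Y2"
  proof -
    have "transpose M = transpose (M ** Y2 ** M)" using b by simp
    also have "\<dots> = transpose M ** transpose (M ** Y2)" by (simp add: matrix_transpose_mul)
    also have "\<dots> = transpose M ** M ** Y2" using b by (simp add: matrix_mul_assoc)
    finally show ?thesis .
  qed
  have MT2: "transpose M = Y1 ** M ** transpose M"
  proof -
    have "transpose M = transpose (M ** Y1 ** M)" using a by simp
    also have "\<dots> = transpose (Y1 ** M) ** transpose M" by (simp add: matrix_transpose_mul matrix_mul_assoc)
    also have "\<dots> = Y1 ** M ** transpose M" using a by simp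
    finally show ?thesis .
  qed
  have "Y1 = Y1 ** M ** Y1" using a by simp
  also have "\<dots> = Y1 ** transpose (M ** Y1)" using a by (simp add: matrix_mul_assoc)
  also have "\<dots> = Y1 ** transpose Y1 ** transpose M" by (simp add: matrix_transpose_mul matrix_mul_assoc)
  also have "\<dots> = Y1 ** transpose Y1 ** transpose M ** M ** Y2" by (subst MT1) (simp add: matrix_mul_assoc)
  also have "\<dots> = Y1 ** transpose (M ** Y1) ** M ** Y2" by (simp add: matrix_transpose_mul matrix_mul_assoc)
  also have "\<dots> = Y1 ** M ** Y1 ** M ** Y2" using a by (simp add: matrix_mul_assoc)
  also have "\<dots> = Y1 ** M ** Y2" using a by simp
  finally have 1: "Y1 = Y1 ** M ** Y2" .
  have "Y2 = Y2 ** M ** Y2" using b by simp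
  also have "\<dots> = transpose (Y2 ** M) ** Y2" using b by (simp add: matrix_mul_assoc)
  also have "\<dots> = transpose M ** transpose Y2 ** Y2" by (simp add: matrix_transpose_mul)
  also have "\<dots> = Y1 ** M ** transpose M ** transpose Y2 ** Y2" by (subst MT2) (simp add: matrix_mul_assoc)
  also have "\<dots> = Y1 ** M ** transpose (Y2 ** M) ** Y2" by (simp add: matrix_transpose_mul matrix_mul_assoc)
  also have "\<dots> = Y1 ** M ** Y2 ** M ** Y2" using b by (simp add: matrix_mul_assoc)
  also have "\<dots> = Y1 ** M ** Y2" using b by (metis matrix_mul_assoc)
  finally have 2: "Y2 = Y1 ** M ** Y2" .
  show ?thesis using 1 2 by simp
qed


lemma pen_exists: fixes M :: "real^'n^'n" assumes symM: "transpose M = M" shows "\<exists>Y. pen M Y"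
proof -
  have saM: "(M *v x) \<bullet> y = x \<bullet> (M *v y)" for x y using sym_adj[OF symM] .
  define K where "K = {x. M *v x = 0}"
  have subK: "subspace K" unfolding K_def subspace_def
    by (simp add: matrix_vector_right_distrib matrix_vector_mult_scaleR)
  obtain T where T: "0 \<notin> T" "T \<subseteq> K" "pairwise orthogonal T" "independent T" "card T = dim K" "span T = K"
    using orthogonal_basis_subspace[OF subK] by blast
  have finT: "finite T" using T(3) pairwise_orthogonal_imp_finite by blast
  define q where "q x = (\<Sum>b\<in>T. (b \<bullet> x / (b \<bullet> b)) *\<^sub>R b)" for x
  have linq: "linear q" unfolding linear_iff q_def
    by (simp add: inner_add_right add_divide_distrib scaleR_add_left sum.distrib scaleR_sum_right)
  have qK: "q x \<in> K" for x
  proof -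
    have "q x \<in> span T" unfolding q_def by (intro span_sum span_mul span_base)
    then show ?thesis using T(6) by simp
  qed
  have qorth: "k \<in> K \<Longrightarrow> k \<bullet> (x - q x) = 0" for k x
    using Gram_Schmidt_step[OF T(3), of k x] T(6) unfolding q_def orthogonal_def by simp
  have qsa: "(q x) \<bullet> y = x \<bullet> (q y)" for x y
    unfolding q_def inner_sum_left inner_sum_right
    by (rule sum.cong) (simp_all add: inner_commute)
  have Qv: "matrix q *v x = q x" for x using linq by (simp add: matrix_works linear_matrix_vector_mul_eq)
  have qfix: "k \<in> K \<Longrightarrow> q k = k" for k
  proof -
    assume k: "k \<in> K"
    have "k - q k \<in> K" using k qK subK by (simp add: subspace_diff)
    then have "(k - q k) \<bullet> (k - q k) = 0" using qorth by blast
    then show ?thesis by simp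
  qed
  have MQ: "M *v q x = 0" for x using qK K_def by simp
  have QM: "q (M *v x) = 0" for x
  proof -
    have "q (M *v x) \<bullet> q (M *v x) = 0" using qsa saM MQ by (metis inner_zero_right)
    then show ?thesis by simp
  qed
  have qq: "q (q x) = q x" for x using qfix qK by blast
  define Q where "Q = matrix q"
  define E where "E = M + Q"
  have Ev: "E *v x = M *v x + q x" for x unfolding E_def Q_def by (simp add: matrix_vector_mult_add_rdistrib Qv)
  have "E *v x = 0 \<Longrightarrow> x = 0" for x
  proof -
    assume h: "E *v x = 0"
    then have "M *v x = - q x" using Ev by (simp add: eq_neg_iff_add_eq_0)
    then have "(M *v x) \<bullet> (M *v x) = - ((M *v x) \<bullet> q x)" by simp
    also have "(M *v x) \<bullet> q x = 0" using saM MQ by simp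
    finally have Mx: "M *v x = 0" by simp
    then have "q x = 0" using h Ev by simp
    moreover have "x \<in> K" using Mx K_def by simp
    ultimately show "x = 0" using qfix by metis
  qed
  then have "invertible E" by (intro inj_invertible inj_of_zero)
  then obtain F where EF: "E ** F = mat 1" "F ** E = mat 1" using mat_inv by blast
  have EFv: "E *v (F *v x) = x" for x by (metis EF(1) matrix_vector_mul_assoc matrix_vector_mul_lid)
  have FEv: "F *v (E *v x) = x" for x by (metis EF(2) matrix_vector_mul_assoc matrix_vector_mul_lid)
  have FQ: "F *v q x = q x" for x using FEv[of "q x"] Ev MQ qq by simp
  have QF: "q (F *v x) = q x" for x
  proof -
    have "q (E *v y) = q y" for y using Ev linear_add[OF linq] QM qq by simp
    then show ?thesis using EFv by metis
  qed
  define Y where "Y = F - Q"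
  have Yv: "Y *v x = F *v x - q x" for x unfolding Y_def Q_def by (simp add: matrix_vector_mult_diff_rdistrib Qv)
  have MF: "M *v (F *v x) = x - q x" for x
  proof -
    have "x = M *v (F *v x) + q x" using EFv[of x] Ev[of "F *v x"] QF[of x] by simp
    then show ?thesis by (metis add_diff_cancel_right')
  qed
  have FM: "F *v (M *v x) = x - q x" for x
  proof -
    have "F *v (M *v x) = F *v (E *v x - q x)" using Ev by simp
    also have "\<dots> = x - q x" using FEv FQ by (simp add: matrix_vector_mult_diff_distrib)
    finally show ?thesis .
  qed
  have MY: "(M ** Y) *v x = x - q x" for x
    by (simp add: matrix_vector_mul_assoc[symmetric] Yv matrix_vector_mult_diff_distrib MF MQ)
  have YM: "(Y ** M) *v x = x - q x" for x
    by (simp add: matrix_vector_mul_assoc[symmetric] Yv FM QM)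
  have YMv: "Y *v (M *v x) = x - q x" for x using YM by (simp add: matrix_vector_mul_assoc)
  have Rsa: "(x - q x) \<bullet> y = x \<bullet> (y - q y)" for x y
    using qsa[of x y] by (simp add: inner_diff_left inner_diff_right)
  have p1: "M ** Y ** M = M"
    unfolding matrix_eq
    by (simp add: matrix_vector_mul_assoc[symmetric] YMv matrix_vector_mult_diff_distrib MQ)
  have p2: "Y ** M ** Y = Y"
  proof -
    have "q (Y *v x) = 0" for x using Yv QF qq linear_diff[OF linq] by simp
    then show ?thesis unfolding matrix_eq
      by (simp add: matrix_vector_mul_assoc[symmetric] YMv)
  qed
  have p3: "transpose (M ** Y) = M ** Y" by (rule sa_transpose) (simp add: MY Rsa)
  have p4: "transpose (Y ** M) = Y ** M" by (rule sa_transpose) (simp add: YM Rsa)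
  show ?thesis unfolding pen_def using p1 p2 p3 p4 by blast
qed

lemma pinv_pen: fixes M :: "real^'n^'n" assumes "transpose M = M" shows "pen M (mp_pinv M)"
proof -
  obtain Y where Y: "pen M Y" using pen_exists[OF assms] by blast
  have "mp_pinv M = Y" unfolding mp_pinv_def
    using Y pen_unique[of M] unfolding pen_def by (intro the_equality) blast+
  then show ?thesis using Y by simp
qed


lemma lim_poly: fixes a b c e :: real
  assumes "\<forall>t>0. 0 \<le> a + b*t + c*t^2 + e*t^3" shows "0 \<le> a"
proof -
  have "((\<lambda>t. a + b*t + c*t^2 + e*t^3) \<longlongrightarrow> a + b*0 + c*0^2 + e*0^3) (at_right 0)"
    by (intro tendsto_intros)
  then have lim: "((\<lambda>t. a + b*t + c*t^2 + e*t^3) \<longlongrightarrow> a) (at_right (0::real))" by simp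
  have "eventually (\<lambda>t. 0 \<le> a + b*t + c*t^2 + e*t^3) (at_right (0::real))"
    using eventually_at_right_less[of 0] by (rule eventually_mono) (use assms in auto)
  then show ?thesis using tendsto_lowerbound[OF lim] by simp
qed

lemma quad_expand: fixes B :: "real^'n^'n"
  assumes saB: "\<forall>x y. (B *v x) \<bullet> y = x \<bullet> (B *v y)"
  shows "(x + t *\<^sub>R y) \<bullet> (B *v (x + t *\<^sub>R y)) = x \<bullet> (B *v x) + 2*t*(x \<bullet> (B *v y)) + t^2 * (y \<bullet> (B *v y))"
proof -
  have "y \<bullet> (B *v x) = x \<bullet> (B *v y)" using saB by (metis inner_commute)
  then show ?thesis
    by (simp add: matrix_vector_right_distrib matrix_vector_mult_scaleR inner_add_left inner_add_right
        power2_eq_square algebra_simps)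
qed

lemma trs_kkt:
  fixes B :: "real^'n^'n" and S :: "(real^'n) set"
  assumes saB: "\<forall>x y. (B *v x) \<bullet> y = x \<bullet> (B *v y)" and subS: "subspace S"
    and BS: "\<forall>x\<in>S. B *v x \<in> S" and bbS: "bb \<in> S" and gpos: "gm > 0"
    and uS: "u \<in> S" and un: "u \<bullet> u = gm^2"
    and umin: "\<forall>w\<in>S. w \<bullet> w = gm^2 \<longrightarrow> u \<bullet> (B *v u) + 2*(bb \<bullet> u) \<le> w \<bullet> (B *v w) + 2*(bb \<bullet> w)"
  shows "\<exists>lam. B *v u - lam *\<^sub>R u = - bb \<and> (\<forall>d\<in>S. lam*(d \<bullet> d) \<le> d \<bullet> (B *v d))"
proof -
  define g where "g = B *v u + bb"
  have key: "(d \<bullet> g) * (d \<bullet> d) \<le> (u \<bullet> d) * (d \<bullet> (B *v d))" if dS: "d \<in> S" and cpos: "0 < u \<bullet> d" for d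
  proof -
    define c where "c = u \<bullet> d"
    define n where "n = d \<bullet> d"
    define a where "a = d \<bullet> (B *v d)"
    define ee where "ee = d \<bullet> g"
    have "d \<noteq> 0" using cpos by auto
    then have npos: "n > 0" unfolding n_def by simp
    define sc where "sc = -2*c/n"
    define w where "w = u + sc *\<^sub>R d"
    have wS: "w \<in> S" unfolding w_def using uS dS subS by (simp add: subspace_add subspace_scale)
    have "w \<bullet> w = u \<bullet> u + sc * (2*c + sc*n)"
      unfolding w_def c_def n_def by (simp add: inner_add_left inner_add_right algebra_simps power2_eq_square inner_commute)
    also have "2*c + sc*n = 0" unfolding sc_def using npos by simp
    finally have "w \<bullet> w = gm^2" using un by simp
    then have "u \<bullet> (B *v u) + 2*(bb \<bullet> u) \<le> w \<bullet> (B *v w) + 2*(bb \<bullet> w)" using umin wS by blast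
    also have "w \<bullet> (B *v w) + 2*(bb \<bullet> w) = u \<bullet> (B *v u) + 2*(bb \<bullet> u) + (sc^2*a + 2* sc*ee)"
      using saB[rule_format, of u d] unfolding w_def quad_expand[OF saB] a_def ee_def g_def
      by (simp add: inner_add_right inner_add_left algebra_simps inner_commute)
    finally have "0 \<le> sc^2*a + 2* sc*ee" by simp
    also have "sc^2*a + 2* sc*ee = (4*c/n^2) * (c*a - ee*n)"
      unfolding sc_def using npos by (simp add: field_simps power2_eq_square)
    finally have h: "0 \<le> (4*c/n^2) * (c*a - ee*n)" .
    have "0 < 4*c/n^2" using cpos npos c_def by simp
    then have "0 \<le> c*a - ee*n" using h by (smt (verit) mult_pos_neg)
    then show ?thesis unfolding c_def a_def ee_def n_def by simp
  qed
  have gS: "g \<in> S" unfolding g_def using BS uS bbS subS by (simp add: subspace_add)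
  define lam where "lam = (u \<bullet> g) / gm^2"
  define e0 where "e0 = g - lam *\<^sub>R u"
  have e0S: "e0 \<in> S" unfolding e0_def using gS uS subS by (simp add: subspace_diff subspace_scale)
  have ue0: "u \<bullet> e0 = 0" unfolding e0_def lam_def using un gpos by (simp add: inner_diff_right)
  have e0g: "e0 \<bullet> g = e0 \<bullet> e0" unfolding e0_def using ue0[unfolded e0_def]
    by (simp add: inner_diff_left inner_diff_right inner_commute)
  have "0 \<le> - ((e0 \<bullet> e0)^2)"
  proof (rule lim_poly[where b = "gm^2 * (e0 \<bullet> (B *v e0)) - (u \<bullet> g) * (e0 \<bullet> e0)"
        and c = "2 * gm^2 * (e0 \<bullet> (B *v u)) - gm^2 * (e0 \<bullet> e0)"
        and e = "gm^2 * (u \<bullet> (B *v u)) - (u \<bullet> g) * gm^2"], intro allI impI)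
    fix t :: real assume tpos: "0 < t"
    define d where "d = e0 + t *\<^sub>R u"
    have dS: "d \<in> S" unfolding d_def using e0S uS subS by (simp add: subspace_add subspace_scale)
    have ud: "u \<bullet> d = t * gm^2" unfolding d_def using ue0 un by (simp add: inner_add_right)
    have "(d \<bullet> g) * (d \<bullet> d) \<le> (u \<bullet> d) * (d \<bullet> (B *v d))"
      using key[OF dS] ud tpos gpos by simp
    moreover have "d \<bullet> g = e0 \<bullet> e0 + t * (u \<bullet> g)" unfolding d_def using e0g by (simp add: inner_add_left)
    moreover have "d \<bullet> d = e0 \<bullet> e0 + t^2 * gm^2" unfolding d_def using ue0 un
      by (simp add: inner_add_left inner_add_right inner_commute power2_eq_square)
    moreover have "d \<bullet> (B *v d) = e0 \<bullet> (B *v e0) + 2*t*(e0 \<bullet> (B *v u)) + t^2 * (u \<bullet> (B *v u))"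
      unfolding d_def by (rule quad_expand[OF saB])
    ultimately have "0 \<le> t * gm^2 * (e0 \<bullet> (B *v e0) + 2*t*(e0 \<bullet> (B *v u)) + t^2 * (u \<bullet> (B *v u)))
        - (e0 \<bullet> e0 + t * (u \<bullet> g)) * (e0 \<bullet> e0 + t^2 * gm^2)" using ud by simp
    then show "0 \<le> - ((e0 \<bullet> e0)^2) + (gm^2 * (e0 \<bullet> (B *v e0)) - (u \<bullet> g) * (e0 \<bullet> e0)) * t
        + (2 * gm^2 * (e0 \<bullet> (B *v u)) - gm^2 * (e0 \<bullet> e0)) * t^2
        + (gm^2 * (u \<bullet> (B *v u)) - (u \<bullet> g) * gm^2) * t^3"
      by (simp add: algebra_simps power2_eq_square power3_eq_cube)
  qed
  then have "e0 = 0" by simp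
  then have glam: "g = lam *\<^sub>R u" unfolding e0_def by simp
  have poscase: "lam * (d \<bullet> d) \<le> d \<bullet> (B *v d)" if dS: "d \<in> S" and cpos: "0 < u \<bullet> d" for d
  proof -
    have "(u \<bullet> d) * (lam * (d \<bullet> d)) \<le> (u \<bullet> d) * (d \<bullet> (B *v d))"
      using key[OF dS cpos] glam by (simp add: inner_commute mult_ac)
    then show ?thesis using cpos by simp
  qed
  have second: "lam * (d \<bullet> d) \<le> d \<bullet> (B *v d)" if dS: "d \<in> S" for d
  proof (cases "u \<bullet> d = 0")
    case False
    show ?thesis
    proof (cases "0 < u \<bullet> d")
      case True then show ?thesis using poscase dS by blast
    next
      case False
      then have "0 < u \<bullet> (- d)" using \<open>u \<bullet> d \<noteq> 0\<close> by simp
      moreover have "- d \<in> S" using dS subS by (simp add: subspace_neg)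
      moreover have "B *v (- d) = - (B *v d)"
        by (metis matrix_vector_mult_diff_distrib diff_0 matrix_vector_mult_0_right)
      ultimately show ?thesis using poscase[of "- d"] by simp
    qed
  next
    case True
    have "0 \<le> (d \<bullet> (B *v d) - lam * (d \<bullet> d))"
    proof (rule lim_poly[where b = "2 * (d \<bullet> (B *v u))" and c = "u \<bullet> (B *v u) - lam * gm^2" and e = 0],
        intro allI impI)
      fix t :: real assume tpos: "0 < t"
      define dt where "dt = d + t *\<^sub>R u"
      have dtS: "dt \<in> S" unfolding dt_def using dS uS subS by (simp add: subspace_add subspace_scale)
      have "u \<bullet> dt = t * gm^2" unfolding dt_def using True un by (simp add: inner_add_right)
      then have "0 < u \<bullet> dt" using tpos gpos by simp
      then have "lam * (dt \<bullet> dt) \<le> dt \<bullet> (B *v dt)" using poscase dtS by blast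
      moreover have "dt \<bullet> dt = d \<bullet> d + t^2 * gm^2" unfolding dt_def using True un
        by (simp add: inner_add_left inner_add_right inner_commute power2_eq_square)
      moreover have "dt \<bullet> (B *v dt) = d \<bullet> (B *v d) + 2*t*(d \<bullet> (B *v u)) + t^2 * (u \<bullet> (B *v u))"
        unfolding dt_def by (rule quad_expand[OF saB])
      ultimately show "0 \<le> (d \<bullet> (B *v d) - lam * (d \<bullet> d)) + 2 * (d \<bullet> (B *v u)) * t
          + (u \<bullet> (B *v u) - lam * gm^2) * t^2 + 0 * t^3"
        by (simp add: algebra_simps)
    qed
    then show ?thesis by simp
  qed
  have "B *v u - lam *\<^sub>R u = - bb" using glam unfolding g_def
    by (metis add_diff_cancel_left' diff_add_cancel minus_diff_eq add.commute eq_diff_eq)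
  then show ?thesis using second by blast
qed


lemma kkt_suff:
  fixes B :: "real^'n^'n"
  assumes saB: "\<forall>x y. (B *v x) \<bullet> y = x \<bullet> (B *v y)"
    and kkt: "B *v u - lam *\<^sub>R u = - bb" and eqn: "u \<bullet> u = w \<bullet> w"
    and psd: "lam * ((w - u) \<bullet> (w - u)) \<le> (w - u) \<bullet> (B *v (w - u))"
  shows "u \<bullet> (B *v u) + 2*(bb \<bullet> u) \<le> w \<bullet> (B *v w) + 2*(bb \<bullet> w)"
proof -
  have bb: "bb = lam *\<^sub>R u - B *v u" using arg_cong[OF kkt, of uminus] by simp
  have s1: "u \<bullet> (B *v w) = w \<bullet> (B *v u)" using saB by (metis inner_commute)
  have "(w - u) \<bullet> (B *v (w - u)) = w \<bullet> (B *v w) - 2 * (w \<bullet> (B *v u)) + u \<bullet> (B *v u)"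
    using s1 by (simp add: matrix_vector_mult_diff_distrib inner_diff_left inner_diff_right)
  moreover have "(w - u) \<bullet> (w - u) = 2 * (u \<bullet> u) - 2 * (u \<bullet> w)"
    using eqn by (simp add: inner_diff_left inner_diff_right inner_commute)
  moreover have "bb \<bullet> u = lam * (u \<bullet> u) - u \<bullet> (B *v u)" "bb \<bullet> w = lam * (u \<bullet> w) - w \<bullet> (B *v u)"
    unfolding bb by (simp_all add: inner_diff_left inner_diff_right inner_commute)
  ultimately show ?thesis using psd eqn by (simp add: algebra_simps inner_commute[of w u])
qed


lemma mv_neg[simp]: fixes X :: "real^'m^'n" shows "X *v (- x) = - (X *v x)"
  by (metis matrix_vector_mult_diff_distrib diff_0 matrix_vector_mult_0_right)

lemma cont_mv: fixes X :: "real^'m^'n" shows "continuous_on S (\<lambda>u. X *v u)"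
  by (rule linear_continuous_on) (simp add: linear_conv_bounded_linear[symmetric])

lemma norm_eq_inner: fixes w :: "real^'n" assumes "0 < g"
  shows "norm w = g \<longleftrightarrow> w \<bullet> w = g^2"
proof
  assume "norm w = g" then show "w \<bullet> w = g^2" by (simp add: power2_norm_eq_inner[symmetric])
next
  assume "w \<bullet> w = g^2"
  then have "(norm w)^2 = g^2" by (simp add: power2_norm_eq_inner)
  then show "norm w = g" using assms by simp
qed

theorem theorem2p9:
  fixes A :: "real^'n^'n" and C :: "real^'m^'n" and b :: "real^'m"
    and lams :: real and zs :: "real^'n"
  assumes "transpose A = A"
    and "CARD('m) < CARD('n)"
    and "rank C = CARD('m)"
    and "norm (n0 C b) < 1"
    and "b0 A C b \<noteq> 0"
    and "QEP_minimizer A C b lams zs"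
  shows "(b0 A C b \<bullet> zs \<noteq> 0 \<longrightarrow>
           CRQ_minimizer A C b
             (n0 C b - ((gam C b)\<^sup>2 / (b0 A C b \<bullet> zs)) *\<^sub>R
                ((projP C ** A ** projP C - lams *\<^sub>R mat 1) *v zs)))
       \<and> (b0 A C b \<bullet> zs = 0 \<longrightarrow>
           (let xs = - (mp_pinv (projP C ** A ** projP C - lams *\<^sub>R mat 1) *v b0 A C b)
            in norm xs \<le> gam C b \<and>
               CRQ_minimizer A C b
                 (n0 C b + xs + sqrt ((gam C b)\<^sup>2 - (norm xs)\<^sup>2) *\<^sub>R ((1 / norm zs) *\<^sub>R zs))))"
proof -
  define P where "P = projP C"
  define B where "B = P ** A ** P"
  define bz where "bz = b0 A C b"
  define g where "g = gam C b"
  define nu where "nu = n0 C b"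
  define N where "N = {u. transpose C *v u = 0}"
  define M where "M l = B - l *\<^sub>R mat 1" for l
  have CP: "transpose C *v (P *v x) = 0" for x unfolding P_def using proj_facts(1)[OF assms(3)] by blast
  have PN: "transpose C *v z = 0 \<Longrightarrow> P *v z = z" for z unfolding P_def using proj_facts(2)[OF assms(3)] by blast
  have saP: "(P *v x) \<bullet> y = x \<bullet> (P *v y)" for x y unfolding P_def using proj_facts(3)[OF assms(3)] by blast
  have Cnu: "transpose C *v nu = b" unfolding nu_def using proj_facts(4)[OF assms(3)] by blast
  have nuN: "transpose C *v u = 0 \<Longrightarrow> nu \<bullet> u = 0" for u unfolding nu_def using proj_facts(5)[OF assms(3)] by blast
  have saA: "(A *v x) \<bullet> y = x \<bullet> (A *v y)" for x y using sym_adj[OF assms(1)] .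
  have Bv: "B *v x = P *v (A *v (P *v x))" for x by (simp add: B_def matrix_vector_mul_assoc matrix_mul_assoc)
  have saB: "\<forall>x y. (B *v x) \<bullet> y = x \<bullet> (B *v y)"
  proof (intro allI)
    fix x y
    have "(B *v x) \<bullet> y = (A *v (P *v x)) \<bullet> (P *v y)" using Bv saP by simp
    also have "\<dots> = (P *v x) \<bullet> (A *v (P *v y))" using saA by simp
    also have "\<dots> = x \<bullet> (B *v y)" using Bv saP by simp
    finally show "(B *v x) \<bullet> y = x \<bullet> (B *v y)" .
  qed
  have BN: "transpose C *v (B *v x) = 0" for x using Bv CP by simp
  have PP: "P *v (P *v x) = P *v x" for x using PN CP by blast
  have PB: "P *v (B *v x) = B *v x" for x using PN BN by blast
  have BP: "B *v (P *v x) = B *v x" for x using Bv PP by simp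
  have subN: "subspace N" unfolding N_def subspace_def
    by (simp add: matrix_vector_right_distrib matrix_vector_mult_scaleR)
  have BNs: "\<forall>x\<in>N. B *v x \<in> N" using BN N_def by simp
  have bzv: "bz = P *v (A *v nu)" unfolding bz_def b0_def P_def nu_def ..
  have bzN: "bz \<in> N" using bzv CP N_def by simp
  have nn: "nu \<bullet> nu < 1" using assms(4) unfolding nu_def[symmetric]
    by (metis power2_norm_eq_inner norm_ge_zero power_less_one_iff abs_of_nonneg less_imp_le abs_square_less_1)
  have g2: "g^2 = 1 - nu \<bullet> nu" unfolding g_def gam_def nu_def[symmetric] using nn
    by (simp add: power2_norm_eq_inner)
  have gpos: "g > 0" unfolding g_def gam_def nu_def[symmetric] using nn
    by (simp add: power2_norm_eq_inner)
  have Mv: "M l *v x = B *v x - l *\<^sub>R x" for l x unfolding M_def by (rule Mvec)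
  have saM: "(M l *v x) \<bullet> y = x \<bullet> (M l *v y)" for l x y
    using saB by (simp add: Mv inner_diff_left inner_diff_right)
  have MP: "M l *v (P *v x) = P *v (M l *v x)" for l x
    by (simp add: Mv BP PB matrix_vector_mult_diff_distrib matrix_vector_mult_scaleR)
  have MN: "transpose C *v (M l *v x) = 0" if "transpose C *v x = 0" for l x
    using that by (simp add: Mv BN matrix_vector_mult_diff_distrib matrix_vector_mult_scaleR)
  have QEPv: "QEP_feasible A C b l z \<longleftrightarrow> z \<noteq> 0 \<and> transpose C *v z = 0 \<and>
      M l *v (M l *v z) = (inverse (g^2) * (bz \<bullet> z)) *\<^sub>R bz" for l z
  proof -
    have "(projP C ** A ** projP C - l *\<^sub>R mat 1) = M l" unfolding M_def B_def P_def ..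
    then show ?thesis unfolding QEP_feasible_def
      by (simp add: g_def[symmetric] bz_def[symmetric] matrix_vector_mul_assoc[symmetric]
          scaleR_matrix_vector_assoc[symmetric] outer_mv)
  qed
  have qmin: "QEP_feasible A C b lams zs" "\<And>mu w. QEP_feasible A C b mu w \<Longrightarrow> lams \<le> mu"
    using assms(6) unfolding QEP_minimizer_def by auto
  define f where "f u = u \<bullet> (B *v u) + 2 * (bz \<bullet> u)" for u
  have obj: "(nu + u) \<bullet> (A *v (nu + u)) = nu \<bullet> (A *v nu) + f u" if "u \<in> N" for u
  proof -
    have Pu: "P *v u = u" using that PN N_def by simp
    have 1: "u \<bullet> (A *v nu) = u \<bullet> bz" using saP[of u "A *v nu"] Pu bzv by simp
    have 2: "nu \<bullet> (A *v u) = u \<bullet> bz" using saA[of nu u] 1 by (simp add: inner_commute)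
    have 3: "u \<bullet> (A *v u) = u \<bullet> (B *v u)" using saP[of u "A *v (P *v u)"] Pu Bv by simp
    show ?thesis unfolding f_def
      by (simp add: matrix_vector_right_distrib inner_add_left inner_add_right 1 2 3 inner_commute[of bz])
  qed
  have nrm: "(nu + u) \<bullet> (nu + u) = nu \<bullet> nu + u \<bullet> u" if "u \<in> N" for u
    using nuN[of u] that N_def by (simp add: inner_add_left inner_add_right inner_commute)
  have crq: "CRQ_minimizer A C b (nu + u)"
    if uN: "u \<in> N" and uu: "u \<bullet> u = g^2" and umin: "\<forall>w\<in>N. w \<bullet> w = g^2 \<longrightarrow> f u \<le> f w" for u
  proof -
    have feas: "CRQ_feasible C b (nu + u)"
      unfolding CRQ_feasible_def using nrm[OF uN] uu g2 Cnu uN N_def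
      by (simp add: matrix_vector_right_distrib)
    have "(nu + u) \<bullet> (A *v (nu + u)) \<le> w \<bullet> (A *v w)" if wf: "CRQ_feasible C b w" for w
    proof -
      define d where "d = w - nu"
      have wd: "w = nu + d" unfolding d_def by simp
      have dN: "d \<in> N" using wf Cnu unfolding d_def N_def CRQ_feasible_def
        by (simp add: matrix_vector_mult_diff_distrib)
      have "d \<bullet> d = g^2" using nrm[OF dN] wf g2 unfolding CRQ_feasible_def wd by simp
      then have "f u \<le> f d" using umin dN by blast
      then show ?thesis using obj[OF uN] obj[OF dN] wd by simp
    qed
    then show ?thesis unfolding CRQ_minimizer_def using feas by blast
  qed
  define K where "K = {u. transpose C *v u = 0 \<and> norm u = g}"
  have zsN: "transpose C *v zs = 0" and zs0: "zs \<noteq> 0" using qmin(1) QEPv by auto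
  have "compact K"
  proof -
    have "bounded K" unfolding bounded_iff K_def by auto
    moreover have "closed K" unfolding K_def
      by (intro closed_Collect_conj closed_Collect_eq continuous_intros cont_mv)
    ultimately show ?thesis using compact_eq_bounded_closed by blast
  qed
  moreover have "(g / norm zs) *\<^sub>R zs \<in> K" unfolding K_def using zsN zs0 gpos
    by (simp add: matrix_vector_mult_scaleR)
  moreover have "continuous_on K f" unfolding f_def by (intro continuous_intros cont_mv)
  ultimately obtain us where usK: "us \<in> K" and usmin: "\<forall>y\<in>K. f us \<le> f y"
    using continuous_attains_inf by blast
  have KN: "w \<in> K \<longleftrightarrow> w \<in> N \<and> w \<bullet> w = g^2" for w
    unfolding K_def N_def using norm_eq_inner[OF gpos] by auto
  have usN: "us \<in> N" and usu: "us \<bullet> us = g^2" using usK KN by auto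
  have "\<forall>w\<in>N. w \<bullet> w = g^2 \<longrightarrow> f us \<le> f w" using usmin KN by auto
  then obtain lst where kkt: "B *v us - lst *\<^sub>R us = - bz" and psd0: "\<forall>d\<in>N. lst * (d \<bullet> d) \<le> d \<bullet> (B *v d)"
    using trs_kkt[OF saB subN BNs bzN gpos usN usu] unfolding f_def by blast
  have kk: "M lst *v us = - bz" using kkt Mv by simp
  have Pus: "P *v us = us" using usN PN N_def by simp
  have us0: "us \<noteq> 0" using usu gpos by auto
  have "QEP_feasible A C b lst z" if "z \<noteq> 0" "transpose C *v z = 0" "M lst *v (M lst *v z) = (inverse (g^2) * (bz \<bullet> z)) *\<^sub>R bz" for z
    using that QEPv by simp
  have lstfeas: "\<exists>z. QEP_feasible A C b lst z"
  proof (cases "\<exists>y. M lst *v y = us")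
    case True
    then obtain y where y: "M lst *v y = us" by blast
    define z where "z = P *v y"
    have Mz: "M lst *v z = us" unfolding z_def using MP y Pus by simp
    have z0: "z \<noteq> 0" using Mz us0 by auto
    have zN: "transpose C *v z = 0" unfolding z_def using CP .
    have "bz \<bullet> z = - (us \<bullet> us)"
    proof -
      have "bz \<bullet> z = - ((M lst *v us) \<bullet> z)" using kk by simp
      also have "\<dots> = - (us \<bullet> us)" using saM Mz by simp
      finally show ?thesis .
    qed
    then have "(inverse (g^2) * (bz \<bullet> z)) *\<^sub>R bz = - bz" using usu gpos by simp
    then show ?thesis using QEPv z0 zN Mz kk by metis
  next
    case False
    obtain y k where y: "y \<in> span (range (\<lambda>x. M lst *v x))"
      and k: "\<And>w. w \<in> span (range (\<lambda>x. M lst *v x)) \<Longrightarrow> orthogonal k w" and usyk: "us = y + k"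
      using orthogonal_subspace_decomp_exists by blast
    have sp: "span (range (\<lambda>x. M lst *v x)) = range (\<lambda>x. M lst *v x)"
      using span_eq_iff linear_subspace_image[OF matrix_vector_mul_linear subspace_UNIV] by blast
    have Mk: "M lst *v k = 0"
    proof -
      have "orthogonal k (M lst *v (M lst *v k))" using k sp by auto
      then have "(M lst *v k) \<bullet> (M lst *v k) = 0" using saM unfolding orthogonal_def by (metis inner_commute)
      then show ?thesis by simp
    qed
    have "k \<bullet> y = 0" using k y unfolding orthogonal_def by blast
    then have kus: "k \<bullet> us = k \<bullet> k" using usyk by (simp add: inner_add_right)
    have "k \<noteq> 0" using False usyk y sp by auto
    define z where "z = P *v k"
    have Mz: "M lst *v z = 0" unfolding z_def using MP Mk by simp
    have "z \<bullet> us = k \<bullet> k" unfolding z_def using saP[of k us] Pus kus by simp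
    then have z0: "z \<noteq> 0" using \<open>k \<noteq> 0\<close> by auto
    have zN: "transpose C *v z = 0" unfolding z_def using CP .
    have "bz \<bullet> z = 0"
    proof -
      have "bz \<bullet> z = - ((M lst *v us) \<bullet> z)" using kk by simp
      also have "\<dots> = 0" using saM Mz by simp
      finally show ?thesis .
    qed
    then show ?thesis using QEPv z0 zN Mz by auto
  qed
  then have lle: "lams \<le> lst" using qmin(2) by blast
  have psd: "lams * (d \<bullet> d) \<le> d \<bullet> (B *v d)" if "d \<in> N" for d
  proof -
    have "lams * (d \<bullet> d) \<le> lst * (d \<bullet> d)" using lle by (simp add: mult_right_mono)
    then show ?thesis using psd0 that by fastforce
  qed
  have opt: "\<forall>w\<in>N. w \<bullet> w = g^2 \<longrightarrow> f u \<le> f w"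
    if uN: "u \<in> N" and uu: "u \<bullet> u = g^2" and Mu: "M lams *v u = - bz" for u
  proof (intro ballI impI)
    fix w assume wN: "w \<in> N" and ww: "w \<bullet> w = g^2"
    have "w - u \<in> N" using wN uN subN by (simp add: subspace_diff)
    then show "f u \<le> f w" unfolding f_def
      using kkt_suff[OF saB, of u lams bz w] Mu Mv uu ww psd by simp
  qed
  have zsq: "M lams *v (M lams *v zs) = (inverse (g^2) * (bz \<bullet> zs)) *\<^sub>R bz" using qmin(1) QEPv by simp
  have zsNs: "zs \<in> N" using zsN N_def by simp
  have eqM: "projP C ** A ** projP C - lams *\<^sub>R mat 1 = M lams" unfolding M_def B_def P_def ..
  have case1: "CRQ_minimizer A C b (nu - (g^2 / (bz \<bullet> zs)) *\<^sub>R (M lams *v zs))" if bne: "bz \<bullet> zs \<noteq> 0"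
  proof -
    define c where "c = - (g^2 / (bz \<bullet> zs))"
    define u where "u = c *\<^sub>R (M lams *v zs)"
    have uN: "u \<in> N" unfolding u_def N_def using MN[OF zsN] by (simp add: matrix_vector_mult_scaleR)
    have Mu: "M lams *v u = - bz" unfolding u_def c_def using zsq bne gpos
      by (simp add: matrix_vector_mult_scaleR)
    have "u \<bullet> u = c^2 * ((M lams *v zs) \<bullet> (M lams *v zs))" unfolding u_def by (simp add: power2_eq_square)
    also have "(M lams *v zs) \<bullet> (M lams *v zs) = zs \<bullet> (M lams *v (M lams *v zs))" using saM by simp
    also have "\<dots> = inverse (g^2) * (bz \<bullet> zs) * (bz \<bullet> zs)" using zsq by (simp add: inner_commute)
    finally have uu: "u \<bullet> u = g^2" unfolding c_def using bne gpos by (simp add: power2_eq_square field_simps)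
    have "CRQ_minimizer A C b (nu + u)" using crq[OF uN uu opt[OF uN uu Mu]] .
    moreover have "nu + u = nu - (g^2 / (bz \<bullet> zs)) *\<^sub>R (M lams *v zs)" unfolding u_def c_def by simp
    ultimately show ?thesis by simp
  qed
  have case2: "norm (- (mp_pinv (M lams) *v bz)) \<le> g \<and>
      CRQ_minimizer A C b (nu + - (mp_pinv (M lams) *v bz)
        + sqrt (g^2 - (norm (- (mp_pinv (M lams) *v bz)))^2) *\<^sub>R ((1 / norm zs) *\<^sub>R zs))"
    if beq: "bz \<bullet> zs = 0"
  proof -
    define Mm where "Mm = M lams"
    have Mzs2: "Mm *v (Mm *v zs) = 0" using zsq beq Mm_def by simp
    have "(Mm *v zs) \<bullet> (Mm *v zs) = 0" using saM Mzs2 Mm_def by simp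
    then have Mzs: "Mm *v zs = 0" by simp
    have Bzs: "B *v zs = lams *\<^sub>R zs" using Mzs Mv Mm_def by simp
    have "lst * (zs \<bullet> zs) \<le> lams * (zs \<bullet> zs)" using psd0 zsNs Bzs by fastforce
    moreover have "zs \<bullet> zs > 0" using zs0 by simp
    ultimately have "lst \<le> lams" by simp
    then have "lst = lams" using lle by simp
    then have kk2: "Mm *v us = - bz" using kk Mm_def by simp
    have symM: "transpose Mm = Mm" using sa_transpose saM Mm_def by blast
    define Y where "Y = mp_pinv Mm"
    have pen: "Mm ** Y ** Mm = Mm" "Y ** Mm ** Y = Y" "transpose (Mm ** Y) = Mm ** Y" "transpose (Y ** Mm) = Y ** Mm"
      using pinv_pen[OF symM] unfolding pen_def Y_def by auto
    have p1v: "Mm *v (Y *v (Mm *v x)) = Mm *v x" for x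
      using arg_cong[OF pen(1), of "\<lambda>X. X *v x"] by (simp add: matrix_vector_mul_assoc matrix_mul_assoc)
    have p2v: "Y *v (Mm *v (Y *v x)) = Y *v x" for x
      using arg_cong[OF pen(2), of "\<lambda>X. X *v x"] by (simp add: matrix_vector_mul_assoc matrix_mul_assoc)
    have p4v: "Y *v (Mm *v x) = Mm *v (transpose Y *v x)" for x
    proof -
      have "(Y ** Mm) *v x = (transpose Mm ** transpose Y) *v x" using pen(4) by (simp add: matrix_transpose_mul)
      then show ?thesis using symM by (simp add: matrix_vector_mul_assoc)
    qed
    have Rsa: "(Y *v (Mm *v x)) \<bullet> y = x \<bullet> (Y *v (Mm *v y))" for x y
      using sym_adj[OF pen(4)] by (simp add: matrix_vector_mul_assoc)
    define xs where "xs = - (Y *v bz)"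
    have xsR: "xs = Y *v (Mm *v us)" unfolding xs_def using kk2
      by (metis matrix_vector_mult_diff_distrib diff_0 matrix_vector_mult_0_right)
    have "xs \<bullet> xs = us \<bullet> xs" unfolding xsR using Rsa p2v by metis
    moreover have "0 \<le> (us - xs) \<bullet> (us - xs)" by simp
    ultimately have "xs \<bullet> xs \<le> us \<bullet> us" by (simp add: inner_diff_left inner_diff_right inner_commute)
    then have "(norm xs)^2 \<le> g^2" using usu by (simp add: power2_norm_eq_inner)
    then have nx: "norm xs \<le> g" using gpos power2_le_imp_le[of "norm xs" g] by linarith
    have Mxs: "Mm *v xs = - bz" using p1v[of us] kk2 unfolding xsR[symmetric] by simp
    define v where "v = transpose Y *v us"
    have xsv: "xs = Mm *v v" unfolding xsR v_def by (rule p4v)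
    define m where "m = xs - P *v xs"
    have m1: "m = Mm *v (v - P *v v)" unfolding m_def xsv using MP Mm_def
      by (simp add: matrix_vector_mult_diff_distrib)
    have Pbz: "P *v bz = bz" using bzN PN N_def by simp
    have "Mm *v m = 0" unfolding m_def using Mxs MP Mm_def Pbz
      by (simp add: matrix_vector_mult_diff_distrib)
    then have "m \<bullet> m = 0" using saM Mm_def m1 by (metis inner_zero_right)
    then have "P *v xs = xs" unfolding m_def by simp
    then have xsN: "xs \<in> N" unfolding N_def using CP[of xs] by simp
    have xz: "xs \<bullet> zs = 0" unfolding xsv using saM Mm_def Mzs by simp
    define zh where "zh = (1 / norm zs) *\<^sub>R zs"
    have zhzh: "zh \<bullet> zh = 1" unfolding zh_def using zs0
      by (simp add: power2_norm_eq_inner[symmetric] power2_eq_square)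
    have zhN: "zh \<in> N" unfolding zh_def using zsNs subN by (simp add: subspace_scale)
    have Mzh: "Mm *v zh = 0" unfolding zh_def using Mzs by (simp add: matrix_vector_mult_scaleR)
    have xzh: "xs \<bullet> zh = 0" unfolding zh_def using xz by simp
    define sq where "sq = sqrt (g^2 - (norm xs)^2)"
    have sq2: "sq^2 = g^2 - (norm xs)^2" unfolding sq_def using nx gpos
      by (simp add: power_mono)
    define u where "u = xs + sq *\<^sub>R zh"
    have uN: "u \<in> N" unfolding u_def using xsN zhN subN by (simp add: subspace_add subspace_scale)
    have xx: "xs \<bullet> xs = norm xs * norm xs" by (metis power2_norm_eq_inner power2_eq_square)
    have uu: "u \<bullet> u = g^2" unfolding u_def using zhzh xzh sq2 xx
      by (simp add: inner_add_left inner_add_right inner_commute power2_eq_square power2_norm_eq_inner)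
    have Mu: "M lams *v u = - bz" unfolding u_def using Mxs Mzh Mm_def
      by (simp add: matrix_vector_right_distrib matrix_vector_mult_scaleR)
    have "CRQ_minimizer A C b (nu + u)" using crq[OF uN uu opt[OF uN uu Mu]] .
    moreover have "nu + xs + sq *\<^sub>R zh = nu + u" unfolding u_def by (simp only: add.assoc)
    ultimately have "norm xs \<le> g \<and> CRQ_minimizer A C b (nu + xs + sq *\<^sub>R zh)" using nx by metis
    then show ?thesis unfolding sq_def zh_def xs_def Y_def Mm_def .
  qed
  show ?thesis
    unfolding eqM bz_def[symmetric] g_def[symmetric] nu_def[symmetric] Let_def
    using case1 case2 by blast
qed

end
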